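(* Let $Q$ be an infinite $\mathbb{N}^*\setminus Q$--free set. Then for every real $\nu>0$: $$\sum_{q\in Q}q^{-\nu}<\infty \iff \sum_{\pi\in\mathrm{Supp}(Q)}\pi^{-\nu}<\infty.$$ In particular, $\nu(Q)$ depends only on $\mathrm{Supp}(Q)$.
   Context: $\mathbb{N}^*$ denotes the set of positive integers. A set $Q\subseteq\mathbb{N}^*$ is called $\mathbb{N}^*\setminus Q$--free if for every $q\in\mathbb{N}^*$: $q\in Q$ if and only if no $v\in\mathbb{N}^*\setminus Q$ divides $q$. $\mathrm{Supp}(Q)$ denotes the set of all primes dividing at least one element of $Q$. For an infinite set $Q\subseteq\mathbb{N}^*$, its exponent of convergence is $\nu(Q)=\inf\{\nu>0:\sum_{q\in Q}q^{-\nu}<\infty\}$. *)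

theory Defs
  imports "HOL-Analysis.Analysis" "HOL-Computational_Algebra.Primes"
begin

definition compl_free :: "nat set \<Rightarrow> bool" where
  "compl_free Q \<longleftrightarrow> 0 \<notin> Q \<and>
     (\<forall>q>0. q \<in> Q \<longleftrightarrow> \<not> (\<exists>v. v > 0 \<and> v \<notin> Q \<and> v dvd q))"

definition Supp :: "nat set \<Rightarrow> nat set" where
  "Supp Q = {p. prime p \<and> (\<exists>q\<in>Q. p dvd q)}"

definition conv_exp :: "nat set \<Rightarrow> real" where
  "conv_exp Q = Inf {\<nu>. \<nu> > 0 \<and> (\<lambda>q. real q powr (-\<nu>)) summable_on Q}"

end

theory Submission
  imports Defs
begin

lemma geom_bound:
  fixes x :: real assumes "0 \<le> x" "x < 1"
  shows "(\<Sum>k\<le>K. x^k) \<le> 1/(1-x)"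
proof -
  have "(\<Sum>k\<le>K. x^k) = (\<Sum>k<Suc K. x^k)" by (simp add: lessThan_Suc_atMost)
  also have "\<dots> = (1 - x^Suc K)/(1-x)" using assms by (subst sum_gp_strict) auto
  also have "\<dots> \<le> 1/(1-x)" using assms by (intro divide_right_mono) auto
  finally show ?thesis .
qed

lemma smooth_bound:
  fixes \<nu> :: real
  assumes "finite P" "\<forall>p\<in>P. prime p" "\<nu> > 0"
  shows "\<And>F. finite F \<Longrightarrow> (\<forall>n\<in>F. n > 0 \<and> prime_factors n \<subseteq> P) \<Longrightarrow>
     (\<Sum>n\<in>F. real n powr (-\<nu>)) \<le> (\<Prod>p\<in>P. 1/(1 - real p powr (-\<nu>)))"
  using assms(1,2)
proof (induction P rule: finite_induct)
  case empty
  then have "F \<subseteq> {1}"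
    by (auto simp: prime_factorization_empty_iff)
  then show ?case using empty
    by (cases "F = {}") (auto dest: subset_singletonD)
next
  case (insert p P F)
  have pp: "prime p" using insert by auto
  define x where "x = real p powr (-\<nu>)"
  have x0: "0 \<le> x" and x1: "x < 1" unfolding x_def using pp assms(3) prime_gt_1_nat
    by (auto intro!: powr_less_one)
  define g where "g n = n div p ^ multiplicity p n" for n
  define M where "M = g ` F"
  define K where "K = Max (insert 0 (multiplicity p ` F))"
  have Mprop: "\<forall>m\<in>M. m > 0 \<and> prime_factors m \<subseteq> P"
  proof
    fix m assume "m \<in> M"
    then obtain n where n: "n \<in> F" "m = g n" unfolding M_def by auto
    have dv: "m dvd n" unfolding n g_def using multiplicity_dvd[of p n] by (metis dvd_div_mult_self dvd_triv_left)
    have "n > 0" using insert.prems n by auto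
    have nd: "\<not> p dvd m" unfolding n g_def by (rule multiplicity_decompose) (use \<open>n>0\<close> pp in auto)
    then have "m > 0" using dv by (auto intro: Nat.gr0I)
    moreover have "prime_factors m \<subseteq> P"
    proof
      fix q assume q: "q \<in> prime_factors m"
      then have "q \<in> prime_factors n" using dv \<open>m>0\<close> \<open>n>0\<close>
        by (auto simp: in_prime_factors_iff intro: dvd_trans)
      then have "q \<in> insert p P" using insert.prems n by auto
      moreover have "q \<noteq> p" using q nd by auto
      ultimately show "q \<in> P" by auto
    qed
    ultimately show "m > 0 \<and> prime_factors m \<subseteq> P" by auto
  qed
  have IH: "(\<Sum>m\<in>M. real m powr (-\<nu>)) \<le> (\<Prod>q\<in>P. 1/(1 - real q powr (-\<nu>)))"
    using insert.IH insert.prems Mprop unfolding M_def by auto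
  have sub: "F \<subseteq> (\<lambda>(k,m). p^k*m) ` ({..K} \<times> M)"
  proof
    fix n assume n: "n \<in> F"
    have "multiplicity p n \<le> K" unfolding K_def using insert.prems(1) n by (auto intro: Max_ge)
    moreover have "n = p ^ multiplicity p n * g n" unfolding g_def
      using multiplicity_dvd[of p n] by auto
    ultimately show "n \<in> (\<lambda>(k,m). p^k*m) ` ({..K} \<times> M)" unfolding M_def using n
      by (intro rev_image_eqI[of "(multiplicity p n, g n)"]) auto
  qed
  have pw: "real (p^k*m) powr (-\<nu>) = x^k * real m powr (-\<nu>)" for k m
  proof -
    have "real (p^k*m) powr (-\<nu>) = (real p ^ k) powr (-\<nu>) * real m powr (-\<nu>)"
      by (simp add: powr_mult)
    also have "(real p ^ k) powr (-\<nu>) = x^k" unfolding x_def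
      using pp prime_gt_0_nat by (simp add: powr_realpow[symmetric] powr_powr mult.commute)
    finally show ?thesis by simp
  qed
  have fin: "finite ({..K} \<times> M)" unfolding M_def using insert.prems by auto
  have "(\<Sum>n\<in>F. real n powr (-\<nu>)) \<le> (\<Sum>n\<in>(\<lambda>(k,m). p^k*m) ` ({..K} \<times> M). real n powr (-\<nu>))"
    by (rule sum_mono2) (use sub fin in auto)
  also have "\<dots> \<le> (\<Sum>km\<in>{..K} \<times> M. real (case km of (k,m) \<Rightarrow> p^k*m) powr (-\<nu>))"
    by (rule sum_image_le[OF fin, of "\<lambda>n. real n powr (-\<nu>)", unfolded o_def]) auto
  also have "\<dots> = (\<Sum>(k,m)\<in>{..K} \<times> M. x^k * real m powr (-\<nu>))"
    by (auto simp del: of_nat_mult of_nat_power simp: pw split: prod.splits intro!: sum.cong)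
  also have "\<dots> = (\<Sum>k\<le>K. x^k) * (\<Sum>m\<in>M. real m powr (-\<nu>))"
    by (simp add: sum.cartesian_product[symmetric] sum_product)
  also have "\<dots> \<le> 1/(1-x) * (\<Prod>q\<in>P. 1/(1 - real q powr (-\<nu>)))"
    using x1 by (intro mult_mono geom_bound x0 x1 IH sum_nonneg prod_nonneg) auto
  also have "\<dots> = (\<Prod>q\<in>insert p P. 1/(1 - real q powr (-\<nu>)))"
    using insert.hyps unfolding x_def by simp
  finally show ?case .
qed

lemma factor_bound:
  fixes x a :: real assumes "0 \<le> x" "x \<le> a" "a < 1"
  shows "1/(1-x) \<le> exp (x/(1-a))"
proof -
  have "1/(1-x) = 1 + x/(1-x)" using assms by (simp add: field_simps)
  also have "x/(1-x) \<le> x/(1-a)" using assms by (intro divide_left_mono) auto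
  then have "1 + x/(1-x) \<le> 1 + x/(1-a)" by simp
  also have "\<dots> \<le> exp (x/(1-a))" by (rule exp_ge_add_one_self)
  finally show ?thesis .
qed

lemma compl_free_dvd:
  assumes "compl_free Q" "q \<in> Q" "d dvd q" "d > 0"
  shows "d \<in> Q"
  using assms unfolding compl_free_def by (metis neq0_conv)

lemma key:
  fixes \<nu> :: real
  assumes cf: "compl_free Q" and nu: "\<nu> > 0"
  shows "(\<lambda>q. real q powr (-\<nu>)) summable_on Q \<longleftrightarrow>
             (\<lambda>p. real p powr (-\<nu>)) summable_on Supp Q"
proof
  have Q0: "0 \<notin> Q" using cf unfolding compl_free_def by auto
  have "Supp Q \<subseteq> Q"
  proof
    fix p assume "p \<in> Supp Q"
    then obtain q where "prime p" "q \<in> Q" "p dvd q" unfolding Supp_def by auto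
    then show "p \<in> Q" using compl_free_dvd[OF cf] prime_gt_0_nat by blast
  qed
  then show "(\<lambda>q. real q powr (-\<nu>)) summable_on Q \<Longrightarrow>
             (\<lambda>p. real p powr (-\<nu>)) summable_on Supp Q"
    using summable_on_subset_banach by blast
next
  assume S: "(\<lambda>p. real p powr (-\<nu>)) summable_on Supp Q"
  have Q0: "0 \<notin> Q" using cf unfolding compl_free_def by auto
  define a :: real where "a = 2 powr (-\<nu>)"
  have a1: "a < 1" unfolding a_def using nu by (intro powr_less_one) auto
  define T where "T = infsum (\<lambda>p. real p powr (-\<nu>)) (Supp Q)"
  show "(\<lambda>q. real q powr (-\<nu>)) summable_on Q"
  proof (rule nonneg_bdd_above_summable_on)
    show "bdd_above (sum (\<lambda>q. real q powr (-\<nu>)) ` {F. F \<subseteq> Q \<and> finite F})"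
    proof (rule bdd_aboveI2)
      fix F assume F: "F \<in> {F. F \<subseteq> Q \<and> finite F}"
      define P where "P = \<Union>(prime_factors ` F)"
      have finP: "finite P" unfolding P_def using F by auto
      have PS: "P \<subseteq> Supp Q" unfolding P_def Supp_def using F
        by (auto simp: in_prime_factors_iff)
      have Pp: "\<forall>p\<in>P. prime p" unfolding P_def by auto
      have Fpos: "\<forall>n\<in>F. n > 0 \<and> prime_factors n \<subseteq> P" using F Q0 unfolding P_def
        by (auto intro: Nat.gr0I)
      have "(\<Sum>n\<in>F. real n powr (-\<nu>)) \<le> (\<Prod>p\<in>P. 1/(1 - real p powr (-\<nu>)))"
        using smooth_bound[OF finP Pp nu] F Fpos by auto
      also have "\<dots> \<le> (\<Prod>p\<in>P. exp (real p powr (-\<nu>) / (1-a)))"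
      proof (rule prod_mono, safe)
        fix p assume "p \<in> P"
        then have "prime p" using Pp by auto
        then have p2: "2 \<le> real p" using prime_ge_2_nat by auto
        have x1: "real p powr (-\<nu>) \<le> a" unfolding a_def using p2 nu
          by (intro powr_mono2') auto
        have "real p powr (-\<nu>) < 1" using x1 a1 by auto
        then show "0 \<le> 1/(1 - real p powr (-\<nu>))" by auto
        show "1/(1 - real p powr (-\<nu>)) \<le> exp (real p powr (-\<nu>) / (1-a))"
          by (rule factor_bound[OF _ x1 a1]) auto
      qed
      also have "\<dots> = exp ((\<Sum>p\<in>P. real p powr (-\<nu>)) / (1-a))"
        by (simp add: exp_sum[OF finP, symmetric] sum_divide_distrib)
      also have "\<dots> \<le> exp (T / (1-a))"
        unfolding T_def using a1 finP PS
        by (intro exp_mono divide_right_mono finite_sum_le_infsum[OF S]) auto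
      finally show "sum (\<lambda>q. real q powr (-\<nu>)) F \<le> exp (T / (1-a))" .
    qed
  qed auto
qed

theorem mainTheorem5:
  fixes Q :: "nat set"
  assumes "infinite Q" and "compl_free Q"
  shows "(\<forall>\<nu>::real. \<nu> > 0 \<longrightarrow>
            ((\<lambda>q. real q powr (-\<nu>)) summable_on Q \<longleftrightarrow>
             (\<lambda>p. real p powr (-\<nu>)) summable_on Supp Q))
       \<and> (\<forall>Q'. infinite Q' \<and> compl_free Q' \<and> Supp Q' = Supp Q \<longrightarrow> conv_exp Q' = conv_exp Q)"
proof (intro conjI allI impI)
  fix \<nu> :: real assume "\<nu> > 0"
  then show "(\<lambda>q. real q powr (-\<nu>)) summable_on Q \<longleftrightarrow>
             (\<lambda>p. real p powr (-\<nu>)) summable_on Supp Q" using key[OF assms(2)] by blast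
next
  fix Q' assume H: "infinite Q' \<and> compl_free Q' \<and> Supp Q' = Supp Q"
  have "{\<nu>. \<nu> > 0 \<and> (\<lambda>q. real q powr (-\<nu>)) summable_on Q'} =
        {\<nu>. \<nu> > 0 \<and> (\<lambda>q. real q powr (-\<nu>)) summable_on Q}"
    using key[OF assms(2)] key[of Q'] H by auto
  then show "conv_exp Q' = conv_exp Q" unfolding conv_exp_def by simp
qed

end
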